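(* Let $V\subsetneq(\mathbb C^* )^n$ be a proper algebraic subvariety and $\mathcal A=\operatorname{Log}(V)$. Then for a generic direction $u\in S^{n-1}$ (i.e. for all $u$ outside a closed nowhere dense subset of $S^{n-1}$) and every line $\ell=\{p+su: s\in\mathbb R\}\subset\mathbb R^n$ with direction $u$, the intersection $\mathcal A\cap\ell$ is compact.
   Context: $\operatorname{Log}(z_1,\dots,z_n)=(\log|z_1|,\dots,\log|z_n|)$; $\operatorname{Log}(V)$ is the amoeba of $V$. *)

theory Defs
  imports "HOL-Analysis.Analysis"
begin

definition is_mpoly :: "(('n::finite \<Rightarrow> nat) \<Rightarrow> complex) \<Rightarrow> bool" where
  "is_mpoly c \<longleftrightarrow> finite {\<alpha>. c \<alpha> \<noteq> 0}"

definition mpoly_eval :: "(('n::finite \<Rightarrow> nat) \<Rightarrow> complex) \<Rightarrow> complex ^ 'n \<Rightarrow> complex" where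
  "mpoly_eval c z = (\<Sum>\<alpha>\<in>{\<alpha>. c \<alpha> \<noteq> 0}. c \<alpha> * (\<Prod>i\<in>UNIV. (z $ i) ^ (\<alpha> i)))"

definition torus :: "(complex ^ 'n::finite) set" where
  "torus = {z. \<forall>i. z $ i \<noteq> 0}"

definition torus_subvariety :: "(complex ^ 'n::finite) set \<Rightarrow> bool" where
  "torus_subvariety V \<longleftrightarrow>
     (\<exists>P. finite P \<and> (\<forall>p\<in>P. is_mpoly p) \<and> V = {z \<in> torus. \<forall>p\<in>P. mpoly_eval p z = 0})"

definition Log :: "complex ^ 'n::finite \<Rightarrow> real ^ 'n" where
  "Log z = (\<chi> i. ln (cmod (z $ i)))"

definition amoeba :: "(complex ^ 'n::finite) set \<Rightarrow> (real ^ 'n) set" where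
  "amoeba V = Log ` V"

end

theory Submission imports Defs begin

lemma expneg: "k<(0::real) \<Longrightarrow> ((\<lambda>s::real. exp(s*k)) \<longlongrightarrow> 0) at_top" 
proof -
  assume "k<0"
  have "LIM x at_top. k * x :> at_bot"
    by (rule filterlim_tendsto_neg_mult_at_bot[OF tendsto_const \<open>k<0\<close> filterlim_ident])
  then have "LIM x at_top. x * k :> at_bot" by (simp add: mult.commute)
  then show ?thesis by (rule filterlim_compose[OF exp_at_bot])
qed

lemma avoid_hyperplanes:
  fixes W :: "('a::real_inner) set"
  assumes "finite W" "0 \<notin> W" "e > 0"
  shows "\<exists>y. dist x y < e \<and> (\<forall>w\<in>W. inner w y \<noteq> 0)"
  using assms
proof (induction W arbitrary: e rule: finite_induct)
  case empty
  then show ?case by (intro exI[of _ x]) auto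
next
  case (insert w W)
  from insert have "e/2 > 0" "0 \<notin> W" "w \<noteq> 0" by auto
  with insert.IH obtain y where y: "dist x y < e/2" "\<forall>w\<in>W. inner w y \<noteq> 0" by blast
  show ?case
  proof (cases "inner w y = 0")
    case False
    have "dist x y < e" using y(1) zero_le_dist[of x y] by linarith
    with y False show ?thesis by (intro exI[of _ y]) auto
  next
    case True
    have "open (\<Inter>w\<in>W. {y. inner w y \<noteq> 0})"
      using insert.hyps(1) by (intro open_INT ballI open_Collect_neq continuous_intros) auto
    moreover have "y \<in> (\<Inter>w\<in>W. {y. inner w y \<noteq> 0})" using y by auto
    ultimately obtain r where r: "r > 0" "ball y r \<subseteq> (\<Inter>w\<in>W. {y. inner w y \<noteq> 0})"
      by (meson openE)
    define m where "m = min r (e/2)"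
    have m: "m > 0" "m \<le> r" "m \<le> e/2" using r \<open>e/2>0\<close> by (auto simp: m_def)
    define d where "d = m / (2 * norm w)"
    have nw: "norm w > 0" using \<open>w \<noteq> 0\<close> by simp
    have dpos: "d > 0" unfolding d_def using m nw by simp
    have dd: "dist y (y + d *\<^sub>R w) = m / 2"
    proof -
      have "dist y (y + d *\<^sub>R w) = norm (d *\<^sub>R w)" by (simp add: dist_norm)
      also have "\<dots> = d * norm w" using dpos by simp
      also have "\<dots> = m / 2" using nw unfolding d_def by simp
      finally show ?thesis .
    qed
    have "y + d *\<^sub>R w \<in> ball y r" using dd m by simp
    with r have h1: "\<forall>v\<in>W. inner v (y + d *\<^sub>R w) \<noteq> 0" by auto
    have "inner w (y + d *\<^sub>R w) = d * inner w w" using True by (simp add: inner_add_right)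
    then have h2: "inner w (y + d *\<^sub>R w) \<noteq> 0" using dpos \<open>w \<noteq> 0\<close> by simp
    have "dist x (y + d *\<^sub>R w) \<le> dist x y + dist y (y + d *\<^sub>R w)" by (rule dist_triangle)
    also have "\<dots> < e" using y(1) dd m by linarith
    finally show ?thesis using h1 h2 by (intro exI[of _ "y + d *\<^sub>R w"]) auto
  qed
qed

lemma dominance:
  fixes S :: "'a set" and c :: "'a \<Rightarrow> complex" and a b :: "'a \<Rightarrow> real"
  assumes "finite S" "S \<noteq> {}" "\<forall>\<alpha>\<in>S. c \<alpha> \<noteq> 0" "inj_on b S"
  shows "\<exists>M. \<forall>s\<ge>M. \<forall>Z. (\<forall>\<alpha>\<in>S. cmod (Z \<alpha>) = exp (a \<alpha> + s * b \<alpha>)) \<longrightarrow> (\<Sum>\<alpha>\<in>S. c \<alpha> * Z \<alpha>) \<noteq> 0"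
proof -
  have "Max (b ` S) \<in> b ` S" using assms by simp
  then obtain a0 where a0: "a0 \<in> S" "b a0 = Max (b ` S)" by auto
  have lt: "b \<beta> < b a0" if "\<beta> \<in> S - {a0}" for \<beta>
  proof -
    have "b \<beta> \<le> b a0" using a0 that assms(1) by simp
    moreover have "b \<beta> \<noteq> b a0" using that a0(1) assms(4) by (auto dest: inj_onD)
    ultimately show ?thesis by simp
  qed
  define T where "T s = (\<Sum>\<beta>\<in>S-{a0}. cmod (c \<beta>) * exp (a \<beta> - a a0) * exp (s * (b \<beta> - b a0)))" for s
  have "(T \<longlongrightarrow> 0) at_top"
    unfolding T_def
  proof (rule tendsto_null_sum)
    fix \<beta> assume "\<beta> \<in> S - {a0}"
    then have "b \<beta> - b a0 < 0" using lt by simp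
    then show "((\<lambda>s. cmod (c \<beta>) * exp (a \<beta> - a a0) * exp (s * (b \<beta> - b a0))) \<longlongrightarrow> 0) at_top"
      by (intro tendsto_mult_right_zero expneg)
  qed
  moreover have c0: "cmod (c a0) > 0" using assms(3) a0 by simp
  ultimately have "eventually (\<lambda>s. T s < cmod (c a0)) at_top"
    by (rule order_tendstoD(2))
  then obtain M where M: "\<And>s. s \<ge> M \<Longrightarrow> T s < cmod (c a0)"
    by (auto simp: eventually_at_top_linorder)
  show ?thesis
  proof (intro exI[of _ M] allI impI)
    fix s Z assume s: "s \<ge> M" and Z: "\<forall>\<alpha>\<in>S. cmod (Z \<alpha>) = exp (a \<alpha> + s * b \<alpha>)"
    define E0 where "E0 = exp (a a0 + s * b a0)"
    have E0: "E0 > 0" by (simp add: E0_def)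
    show "(\<Sum>\<alpha>\<in>S. c \<alpha> * Z \<alpha>) \<noteq> 0"
    proof
      assume eq: "(\<Sum>\<alpha>\<in>S. c \<alpha> * Z \<alpha>) = 0"
      have "(\<Sum>\<alpha>\<in>S. c \<alpha> * Z \<alpha>) = c a0 * Z a0 + (\<Sum>\<alpha>\<in>S-{a0}. c \<alpha> * Z \<alpha>)"
        using a0(1) assms(1) by (simp add: sum.remove)
      with eq have "c a0 * Z a0 = - (\<Sum>\<alpha>\<in>S-{a0}. c \<alpha> * Z \<alpha>)" by (simp add: eq_neg_iff_add_eq_0)
      then have "cmod (c a0) * E0 = cmod (\<Sum>\<alpha>\<in>S-{a0}. c \<alpha> * Z \<alpha>)"
        using Z a0(1) by (metis E0_def norm_minus_cancel norm_mult)
      also have "\<dots> \<le> (\<Sum>\<alpha>\<in>S-{a0}. cmod (c \<alpha> * Z \<alpha>))" by (rule norm_sum)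
      also have "\<dots> = (\<Sum>\<alpha>\<in>S-{a0}. E0 * (cmod (c \<alpha>) * exp (a \<alpha> - a a0) * exp (s * (b \<alpha> - b a0))))"
      proof (rule sum.cong[OF refl])
        fix \<alpha> assume "\<alpha> \<in> S - {a0}"
        then have "cmod (Z \<alpha>) = exp (a \<alpha> + s * b \<alpha>)" using Z by auto
        moreover have "exp (a \<alpha> + s * b \<alpha>) = E0 * exp (a \<alpha> - a a0) * exp (s * (b \<alpha> - b a0))"
          unfolding E0_def by (simp add: exp_add[symmetric] algebra_simps)
        ultimately show "cmod (c \<alpha> * Z \<alpha>) = E0 * (cmod (c \<alpha>) * exp (a \<alpha> - a a0) * exp (s * (b \<alpha> - b a0)))"
          by (simp add: norm_mult)
      qed
      also have "\<dots> = E0 * T s" by (simp add: T_def sum_distrib_left)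
      also have "\<dots> < E0 * cmod (c a0)" using M[OF s] E0 by simp
      finally show False by simp
    qed
  qed
qed

lemma norm_monomial:
  fixes z :: "complex ^ 'n::finite"
  assumes "z \<in> torus"
  shows "cmod (\<Prod>i\<in>UNIV. (z $ i) ^ (\<alpha> i)) = exp (inner (\<chi> i. real (\<alpha> i)) (Log z))"
proof -
  have "cmod (\<Prod>i\<in>UNIV. (z $ i) ^ (\<alpha> i)) = (\<Prod>i\<in>UNIV. cmod (z $ i) ^ (\<alpha> i))"
    by (simp add: prod_norm[symmetric] norm_power)
  also have "\<dots> = (\<Prod>i\<in>UNIV. exp (real (\<alpha> i) * ln (cmod (z $ i))))"
  proof (rule prod.cong[OF refl])
    fix i
    have "cmod (z $ i) > 0" using assms by (simp add: torus_def)
    then show "cmod (z $ i) ^ (\<alpha> i) = exp (real (\<alpha> i) * ln (cmod (z $ i)))"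
      by (simp add: exp_of_nat_mult)
  qed
  also have "\<dots> = exp (\<Sum>i\<in>UNIV. real (\<alpha> i) * ln (cmod (z $ i)))"
    by (simp add: exp_sum)
  also have "\<dots> = exp (inner (\<chi> i. real (\<alpha> i)) (Log z))"
    by (simp add: inner_vec_def Log_def)
  finally show ?thesis .
qed


theorem mainTheorem4:
  fixes V :: "(complex ^ 'n::finite) set"
  assumes "torus_subvariety V" and "V \<noteq> torus"
  shows "\<exists>B. B \<subseteq> sphere (0::real^'n) 1
           \<and> closedin (top_of_set (sphere (0::real^'n) 1)) B
           \<and> (top_of_set (sphere (0::real^'n) 1)) interior_of B = {}
           \<and> (\<forall>u \<in> sphere 0 1 - B. \<forall>p::real^'n.
                compact (amoeba V \<inter> {p + s *\<^sub>R u | s. True}))"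
proof -
  from assms(1) obtain P where P: "finite P" "\<forall>p\<in>P. is_mpoly p"
    and Veq: "V = {z \<in> torus. \<forall>p\<in>P. mpoly_eval p z = 0}"
    unfolding torus_subvariety_def by blast
  from assms(2) Veq obtain z0 q where z0: "z0 \<in> torus" "q \<in> P" "mpoly_eval q z0 \<noteq> 0" by blast
  define S where "S = {\<alpha>. q \<alpha> \<noteq> 0}"
  have Sfin: "finite S" using P z0 by (simp add: S_def is_mpoly_def)
  have Sne: "S \<noteq> {}" using z0(3) unfolding mpoly_eval_def S_def[symmetric] by auto
  define e :: "('n \<Rightarrow> nat) \<Rightarrow> real^'n" where "e \<alpha> = (\<chi> i. real (\<alpha> i))" for \<alpha>
  define W where "W = (\<lambda>(\<alpha>,\<beta>). e \<alpha> - e \<beta>) ` {(\<alpha>,\<beta>). \<alpha> \<in> S \<and> \<beta> \<in> S \<and> \<alpha> \<noteq> \<beta>}"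
  have Wfin: "finite W" unfolding W_def
    by (rule finite_imageI, rule finite_subset[of _ "S \<times> S"]) (use Sfin in auto)
  have einj: "e \<alpha> = e \<beta> \<Longrightarrow> \<alpha> = \<beta>" for \<alpha> \<beta>
    by (auto simp: e_def vec_eq_iff)
  have W0: "0 \<notin> W" unfolding W_def using einj by auto
  define B where "B = {u \<in> sphere (0::real^'n) 1. \<exists>w\<in>W. inner w u = 0}"
  have half: "\<exists>M. \<forall>s\<ge>M. p + s *\<^sub>R u \<notin> amoeba V"
    if u: "\<forall>w\<in>W. inner w u \<noteq> 0" for u p :: "real^'n"
  proof -
    have "inj_on (\<lambda>\<alpha>. inner (e \<alpha>) u) S"
    proof (rule inj_onI, rule ccontr)
      fix \<alpha> \<beta> assume "\<alpha> \<in> S" "\<beta> \<in> S" "inner (e \<alpha>) u = inner (e \<beta>) u" "\<alpha> \<noteq> \<beta>"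
      then have "e \<alpha> - e \<beta> \<in> W" "inner (e \<alpha> - e \<beta>) u = 0" 
        by (auto simp: W_def inner_diff_left)
      with u show False by blast
    qed
    from dominance[OF Sfin Sne _ this, of q "\<lambda>\<alpha>. inner (e \<alpha>) p"]
    obtain M where M: "\<And>s Z. s \<ge> M \<Longrightarrow> (\<forall>\<alpha>\<in>S. cmod (Z \<alpha>) = exp (inner (e \<alpha>) p + s * inner (e \<alpha>) u))
       \<Longrightarrow> (\<Sum>\<alpha>\<in>S. q \<alpha> * Z \<alpha>) \<noteq> 0"
      by (auto simp: S_def)
    show ?thesis
    proof (intro exI[of _ M] allI impI notI)
      fix s assume s: "s \<ge> M" and "p + s *\<^sub>R u \<in> amoeba V"
      then obtain z where z: "z \<in> V" "Log z = p + s *\<^sub>R u" by (auto simp: amoeba_def)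
      then have zt: "z \<in> torus" and zq: "mpoly_eval q z = 0" using Veq z0(2) by auto
      have "\<forall>\<alpha>\<in>S. cmod (\<Prod>i\<in>UNIV. (z $ i) ^ (\<alpha> i)) = exp (inner (e \<alpha>) p + s * inner (e \<alpha>) u)"
        using norm_monomial[OF zt] z(2) by (simp add: e_def inner_add_right)
      from M[OF s this] zq show False by (simp add: mpoly_eval_def S_def)
    qed
  qed
  show ?thesis
  proof (intro exI[of _ B] conjI ballI allI)
    show "B \<subseteq> sphere 0 1" by (auto simp: B_def)
  next
    have "B = sphere 0 1 \<inter> (\<Union>w\<in>W. {u. inner w u = 0})" by (auto simp: B_def)
    moreover have "closed (\<Union>w\<in>W. {u::real^'n. inner w u = 0})"
      using Wfin by (intro closed_UN ballI closed_Collect_eq continuous_intros) auto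
    ultimately show "closedin (top_of_set (sphere 0 1)) B"
      by (simp add: closedin_closed_Int)
  next
    show "top_of_set (sphere 0 1) interior_of B = {}"
      unfolding interior_of_eq_empty
    proof (intro allI impI)
      fix U assume U: "openin (top_of_set (sphere (0::real^'n) 1)) U \<and> U \<subseteq> B"
      show "U = {}"
      proof (rule ccontr)
        assume "U \<noteq> {}"
        then obtain u where uU: "u \<in> U" by auto
        from U obtain G where G: "open G" "U = sphere 0 1 \<inter> G" by (auto simp: openin_open)
        with uU obtain r where r: "r > 0" "ball u r \<subseteq> G" by (meson IntD2 openE)
        define r' where "r' = min (r/2) (1/2)"
        have r': "r' > 0" using r by (simp add: r'_def)
        from avoid_hyperplanes[OF Wfin W0 r'] obtain x where
          x: "dist u x < r'" "\<forall>w\<in>W. inner w x \<noteq> 0" by blast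
        have nu: "norm u = 1" using uU G by auto
        have nx: "\<bar>norm x - 1\<bar> \<le> dist u x"
          using nu by (metis dist_norm norm_minus_commute norm_triangle_ineq3)
        then have xpos: "norm x > 0" using x(1) r'_def by linarith
        define y where "y = x /\<^sub>R norm x"
        have ys: "y \<in> sphere 0 1" using xpos by (simp add: y_def)
        have "dist y x = \<bar>norm x - 1\<bar>"
        proof -
          have "y - x = (1 / norm x - 1) *\<^sub>R x" by (simp add: y_def algebra_simps divide_inverse)
          then have "dist y x = \<bar>1 / norm x - 1\<bar> * norm x" by (simp add: dist_norm)
          also have "\<dots> = \<bar>(1 / norm x - 1) * norm x\<bar>" using xpos by (simp add: abs_mult)
          also have "\<dots> = \<bar>1 - norm x\<bar>" using xpos by (simp add: algebra_simps)
          finally show ?thesis by simp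
        qed
        then have "dist u y \<le> 2 * dist u x"
          using dist_triangle[of u y x] nx by (simp add: dist_commute)
        then have "dist u y < r" using x(1) r'_def by linarith
        with r ys G have "y \<in> U" by auto
        with U have "y \<in> B" by auto
        then obtain w where "w \<in> W" "inner w y = 0" by (auto simp: B_def)
        moreover have "inner w y = inner w x / norm x" by (simp add: y_def divide_inverse_commute)
        ultimately show False using x(2) xpos by auto
      qed
    qed
  next
    fix u :: "real^'n" and p :: "real^'n"
    assume "u \<in> sphere 0 1 - B"
    then have nu: "norm u = 1" and u: "\<forall>w\<in>W. inner w u \<noteq> 0" by (auto simp: B_def)
    then have u': "\<forall>w\<in>W. inner w (-u) \<noteq> 0" by simp
    obtain M1 where M1: "\<And>s. s \<ge> M1 \<Longrightarrow> p + s *\<^sub>R u \<notin> amoeba V" using half[OF u] by blast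
    obtain M2 where M2: "\<And>s. s \<ge> M2 \<Longrightarrow> p + s *\<^sub>R (-u) \<notin> amoeba V" using half[OF u'] by blast
    define N where "N = max \<bar>M1\<bar> \<bar>M2\<bar>"
    define R where "R = norm p + N"
    define K where "K = (\<lambda>s. p + s *\<^sub>R u) ` {-N..N}"
    have Kc: "compact K" unfolding K_def
      by (intro compact_continuous_image continuous_intros) auto
    have sub: "\<exists>s. \<bar>s\<bar> \<le> N \<and> x = p + s *\<^sub>R u" if "x \<in> amoeba V \<inter> {p + s *\<^sub>R u | s. True}" for x
    proof -
      from that obtain s where s: "x = p + s *\<^sub>R u" "x \<in> amoeba V" by auto
      have "s < M1" using M1[of s] s by (meson not_le)
      moreover have "-s < M2" using M2[of "-s"] s by (simp add: not_le[symmetric]) (meson not_le)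
      ultimately show ?thesis using s by (intro exI[of _ s]) (auto simp: N_def)
    qed
    define A where "A = {z::complex^'n. \<forall>i. exp (-R) \<le> cmod (z $ i) \<and> cmod (z $ i) \<le> exp R}"
    define C where "C = (A \<inter> Log -` K) \<inter> (\<Inter>q\<in>P. {z. mpoly_eval q z = 0})"
    have Acl: "closed A" unfolding A_def
      by (intro closed_Collect_all closed_Collect_conj closed_Collect_le continuous_intros)
    have Abd: "bounded A"
    proof -
      have "norm z \<le> real CARD('n) * exp R" if "z \<in> A" for z
      proof -
        have "norm z \<le> (\<Sum>i\<in>UNIV. cmod (z $ i))" unfolding norm_vec_def by (rule L2_set_le_sum) auto
        also have "\<dots> \<le> (\<Sum>i\<in>(UNIV::'n set). exp R)"
          using that by (intro sum_mono) (auto simp: A_def)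
        finally show ?thesis by simp
      qed
      then show ?thesis by (auto simp: bounded_iff)
    qed
    have Ator: "A \<subseteq> torus" unfolding A_def torus_def
      by auto (metis exp_gt_zero norm_zero not_le)
    have Lcont: "continuous_on A Log"
      unfolding Log_def
      using Ator by (intro continuous_on_vec_lambda continuous_on_ln continuous_intros) (auto simp: torus_def)
    have "closed (A \<inter> Log -` K)"
      by (rule continuous_closed_preimage[OF Lcont Acl compact_imp_closed[OF Kc]])
    moreover have "closed (\<Inter>q\<in>P. {z::complex^'n. mpoly_eval q z = 0})"
      unfolding mpoly_eval_def
      by (intro closed_INT ballI closed_Collect_eq continuous_intros)
    ultimately have "closed C" unfolding C_def by (rule closed_Int)
    moreover have "bounded C" using Abd by (rule bounded_subset) (auto simp: C_def)
    ultimately have Cc: "compact C" by (simp add: compact_eq_bounded_closed)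
    have "amoeba V \<inter> {p + s *\<^sub>R u | s. True} = Log ` C"
    proof
      show "amoeba V \<inter> {p + s *\<^sub>R u | s. True} \<subseteq> Log ` C"
      proof
        fix x assume xa: "x \<in> amoeba V \<inter> {p + s *\<^sub>R u | s. True}"
        from sub[OF xa] obtain s where s: "\<bar>s\<bar> \<le> N" "x = p + s *\<^sub>R u" by blast
        from xa obtain z where z: "z \<in> V" "x = Log z" by (auto simp: amoeba_def)
        have xK: "x \<in> K" unfolding K_def using s by (intro image_eqI[of _ _ s]) auto
        have "norm x \<le> norm p + norm (s *\<^sub>R u)" using s(2) norm_triangle_ineq by blast
        then have nxR: "norm x \<le> R" using s(1) nu by (simp add: R_def)
        have "z \<in> A" unfolding A_def mem_Collect_eq
        proof
          fix i
          have zi: "cmod (z $ i) > 0" using z Veq by (auto simp: torus_def)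
          have "\<bar>ln (cmod (z $ i))\<bar> \<le> R"
            using component_le_norm_cart[of x i] nxR z(2) by (simp add: Log_def)
          then have "-R \<le> ln (cmod (z $ i))" "ln (cmod (z $ i)) \<le> R" by auto
          then show "exp (-R) \<le> cmod (z $ i) \<and> cmod (z $ i) \<le> exp R"
            using zi by (metis exp_le_cancel_iff exp_ln)
        qed
        then have "z \<in> C" using z xK Veq by (auto simp: C_def)
        then show "x \<in> Log ` C" using z by auto
      qed
    next
      show "Log ` C \<subseteq> amoeba V \<inter> {p + s *\<^sub>R u | s. True}"
      proof
        fix x assume "x \<in> Log ` C"
        then obtain z where z: "z \<in> C" "x = Log z" by auto
        then have "z \<in> V" using Ator Veq by (auto simp: C_def)
        moreover have "x \<in> K" using z by (auto simp: C_def)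
        ultimately show "x \<in> amoeba V \<inter> {p + s *\<^sub>R u | s. True}"
          using z by (auto simp: amoeba_def K_def)
      qed
    qed
    moreover have "compact (Log ` C)"
      by (rule compact_continuous_image[OF continuous_on_subset[OF Lcont] Cc]) (auto simp: C_def)
    ultimately show "compact (amoeba V \<inter> {p + s *\<^sub>R u | s. True})" by simp
  qed
qed

end
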